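(* Let $U=\sum_{j=0}^3 c_j\sigma_j\otimes\sigma_j$ be a normalized two-qubit unitary (see context). For $\alpha,\beta\in[0,\pi/2]$, $\theta\in[0,2\pi)$, $\mu\in(0,\pi/2]$ let $$|\psi(\alpha;\theta,\mu)\rangle=\cos\alpha|0,0\rangle+\sin\alpha|1\rangle(e^{i\theta}\cos\mu|0\rangle+\sin\mu|1\rangle)\in\mathcal H_A\otimes\mathcal H_{R_A},$$ $$|\phi(\beta)\rangle=\cos\beta|0,0\rangle+\sin\beta|1,1\rangle\in\mathcal H_B\otimes\mathcal H_{R_B},$$ with $R_A,R_B$ qubits. Suppose that the maximum defining $K_E(U)$ is attained at an input state of the form $|\psi(\alpha;\theta,\mu)\rangle_{AR_A}\otimes|\phi(\beta)\rangle_{BR_B}$ for some parameters. Then the maximum is also attained at an input of the form $(\cos\alpha|00\rangle+\sin\alpha|11\rangle)_{AR_A}\otimes(\cos\beta|00\rangle+\sin\beta|11\rangle)_{BR_B}$, i.e. $K_E(U)=\max_{\alpha,\beta\in[0,\pi/2]}E(\varphi(\alpha,\beta;\tfrac{\pi}{2},\tfrac{\pi}{2}))$.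
   Context: Pauli matrices: $\sigma_0=I$, $\sigma_1=\begin{pmatrix}0&1\\1&0\end{pmatrix}$, $\sigma_2=\begin{pmatrix}0&-i\\i&0\end{pmatrix}$, $\sigma_3=\begin{pmatrix}1&0\\0&-1\end{pmatrix}$. For real $x,y,z$ set $c_0=\cos x\cos y\cos z+i\sin x\sin y\sin z$, $c_1=\cos x\sin y\sin z+i\sin x\cos y\cos z$, $c_2=\sin x\cos y\sin z+i\cos x\sin y\cos z$, $c_3=\sin x\sin y\cos z+i\cos x\cos y\sin z$, and $U=\sum_{j=0}^3c_j\sigma_j\otimes\sigma_j$ acting on qubits $A,B$. $U$ is called normalized if $\pi/4\ge x\ge y\ge z\ge0$ and $0<y<\pi/4$. For a bipartite unitary $U$ on $\mathcal H_A\otimes\mathcal H_B$, the entangling power is $K_E(U)=\max E\big(U(|\phi\rangle_{AR_A}\otimes|\psi\rangle_{BR_B})\big)$, the maximum over pure states on $AR_A$ and $BR_B$ with arbitrary finite-dimensional ancillas $R_A,R_B$ ($U$ acting on $A,B$), where for a pure state $|\chi\rangle$ on $AR_A\otimes BR_B$, $E(|\chi\rangle)=S(\mathrm{Tr}_{AR_A}|\chi\rangle\langle\chi|)$ is the von Neumann entropy with base-2 logarithm (in ebits). $E(\varphi(\alpha,\beta;\frac{\pi}{2},\frac{\pi}{2}))$ denotes $E$ of $U\big((\cos\alpha|00\rangle+\sin\alpha|11\rangle)_{AR_A}\otimes(\cos\beta|00\rangle+\sin\beta|11\rangle)_{BR_B}\big)$ with $R_A,R_B$ qubits. *)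

theory Defs
  imports Complex_Main "Jordan_Normal_Form.Char_Poly"
begin

text \<open>Pauli matrices sigma_j, entries indexed by 0/1 (row, column).\<close>
definition pauli :: "nat \<Rightarrow> nat \<Rightarrow> nat \<Rightarrow> complex" where
  "pauli j k l =
     (if j = 0 then (if k = l then 1 else 0)
      else if j = 1 then (if k \<noteq> l then 1 else 0)
      else if j = 2 then (if k = 0 \<and> l = 1 then - \<i> else if k = 1 \<and> l = 0 then \<i> else 0)
      else (if k = l then (if k = 0 then 1 else -1) else 0))"

definition ccoef :: "real \<Rightarrow> real \<Rightarrow> real \<Rightarrow> nat \<Rightarrow> complex" where
  "ccoef x y z j =
     (if j = 0 then complex_of_real (cos x * cos y * cos z) + \<i> * complex_of_real (sin x * sin y * sin z)
      else if j = 1 then complex_of_real (cos x * sin y * sin z) + \<i> * complex_of_real (sin x * cos y * cos z)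
      else if j = 2 then complex_of_real (sin x * cos y * sin z) + \<i> * complex_of_real (cos x * sin y * cos z)
      else complex_of_real (sin x * sin y * cos z) + \<i> * complex_of_real (cos x * cos y * sin z))"

text \<open>Matrix entry <a b| U |a' b'> of U = sum_j c_j sigma_j (x) sigma_j on qubits A,B.\<close>
definition Uent :: "real \<Rightarrow> real \<Rightarrow> real \<Rightarrow> nat \<Rightarrow> nat \<Rightarrow> nat \<Rightarrow> nat \<Rightarrow> complex" where
  "Uent x y z a b a' b' = (\<Sum>j<4. ccoef x y z j * pauli j a a' * pauli j b b')"

definition normalized :: "real \<Rightarrow> real \<Rightarrow> real \<Rightarrow> bool" where
  "normalized x y z \<longleftrightarrow> pi/4 \<ge> x \<and> x \<ge> y \<and> y \<ge> z \<and> z \<ge> 0 \<and> 0 < y \<and> y < pi/4"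

text \<open>A pure state on a qubit tensor an m-dimensional ancilla: amplitudes f a r, a<2, r<m.
  It is a unit vector if the squared norms of the amplitudes sum to 1.\<close>
definition unit_state :: "nat \<Rightarrow> (nat \<Rightarrow> nat \<Rightarrow> complex) \<Rightarrow> bool" where
  "unit_state m f \<longleftrightarrow> (\<Sum>a<2. \<Sum>r<m. (cmod (f a r))\<^sup>2) = 1"

text \<open>Amplitudes of U (|f>_{A R_A} (x) |g>_{B R_B}), indexed by (a, r, b, s).\<close>
definition out_state :: "real \<Rightarrow> real \<Rightarrow> real \<Rightarrow> (nat \<Rightarrow> nat \<Rightarrow> complex) \<Rightarrow> (nat \<Rightarrow> nat \<Rightarrow> complex)
    \<Rightarrow> nat \<Rightarrow> nat \<Rightarrow> nat \<Rightarrow> nat \<Rightarrow> complex" where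
  "out_state x y z f g a r b s = (\<Sum>a'<2. \<Sum>b'<2. Uent x y z a b a' b' * f a' r * g b' s)"

text \<open>Reduced density matrix on B R_B (partial trace over A R_A) of a pure state chi,
  with dim R_A = m, dim R_B = n; basis index of |b,s> is b*n+s.\<close>
definition reduced_BR :: "nat \<Rightarrow> nat \<Rightarrow> (nat \<Rightarrow> nat \<Rightarrow> nat \<Rightarrow> nat \<Rightarrow> complex) \<Rightarrow> complex mat" where
  "reduced_BR m n chi = mat (2*n) (2*n) (\<lambda>(i,j).
      \<Sum>a<2. \<Sum>r<m. chi a r (i div n) (i mod n) * cnj (chi a r (j div n) (j mod n)))"

text \<open>von Neumann entropy (base 2) of a density matrix: - sum of lambda log2 lambda over its
  eigenvalues with multiplicity (roots, via proots, of the characteristic polynomial), with 0 log 0 = 0.\<close>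
definition vn_entropy :: "complex mat \<Rightarrow> real" where
  "vn_entropy rho = sum_mset (image_mset (\<lambda>ev.
      (if Re ev > 0 then - Re ev * log 2 (Re ev) else 0)) (proots (char_poly rho)))"

text \<open>E(U(|f> (x) |g>)) with dim R_A = m, dim R_B = n.\<close>
definition ent_out :: "real \<Rightarrow> real \<Rightarrow> real \<Rightarrow> nat \<Rightarrow> nat \<Rightarrow> (nat \<Rightarrow> nat \<Rightarrow> complex) \<Rightarrow> (nat \<Rightarrow> nat \<Rightarrow> complex) \<Rightarrow> real" where
  "ent_out x y z m n f g = vn_entropy (reduced_BR m n (out_state x y z f g))"

definition ent_values :: "real \<Rightarrow> real \<Rightarrow> real \<Rightarrow> real set" where
  "ent_values x y z = {ent_out x y z m n f g | m n f g.
      m \<ge> 1 \<and> n \<ge> 1 \<and> unit_state m f \<and> unit_state n g}"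

text \<open>Entangling power K_E(U) (the maximum, written as a supremum).\<close>
definition K_E :: "real \<Rightarrow> real \<Rightarrow> real \<Rightarrow> real" where
  "K_E x y z = Sup (ent_values x y z)"

definition psi_state :: "real \<Rightarrow> real \<Rightarrow> real \<Rightarrow> nat \<Rightarrow> nat \<Rightarrow> complex" where
  "psi_state \<alpha> \<theta> \<mu> a r =
     (if a = 0 \<and> r = 0 then complex_of_real (cos \<alpha>)
      else if a = 1 \<and> r = 0 then complex_of_real (sin \<alpha> * cos \<mu>) * cis \<theta>
      else if a = 1 \<and> r = 1 then complex_of_real (sin \<alpha> * sin \<mu>)
      else 0)"

definition phi_state :: "real \<Rightarrow> nat \<Rightarrow> nat \<Rightarrow> complex" where
  "phi_state \<beta> b s =
     (if b = 0 \<and> s = 0 then complex_of_real (cos \<beta>)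
      else if b = 1 \<and> s = 1 then complex_of_real (sin \<beta>)
      else 0)"

end

theory Submission
  imports Defs "Jordan_Normal_Form.Schur_Decomposition" "HOL-Computational_Algebra.Fundamental_Theorem_Algebra"
begin


lemma sum2: "(\<Sum>j<(2::nat). h j) = h 0 + h 1"
  by (simp add: numeral_2_eq_2)
lemma sum4: "(\<Sum>j<(4::nat). h j) = h 0 + h 1 + h 2 + h 3"
  by (simp add: eval_nat_numeral)

lemma uent_parity:
  assumes "a < 2" "b < 2" "a' < 2" "b' < 2" "odd (a + b + a' + b')"
  shows "Uent x y z a b a' b' = 0"
proof -
  have "a = 0 \<or> a = 1" "b = 0 \<or> b = 1" "a' = 0 \<or> a' = 1" "b' = 0 \<or> b' = 1" using assms by auto
  then show ?thesis using assms(5)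
    by (auto simp: Uent_def pauli_def sum4)
qed

definition Tm :: "real \<Rightarrow> real \<Rightarrow> real \<Rightarrow> (nat \<Rightarrow> nat \<Rightarrow> complex) \<Rightarrow> nat \<Rightarrow> nat \<Rightarrow> nat \<Rightarrow> nat \<Rightarrow> complex" where
  "Tm x y z g a b s a' = (\<Sum>b'<2. Uent x y z a b a' b' * g b' s)"

definition Gm :: "nat \<Rightarrow> (nat \<Rightarrow> nat \<Rightarrow> complex) \<Rightarrow> nat \<Rightarrow> nat \<Rightarrow> complex" where
  "Gm m f a1 a2 = (\<Sum>r<m. f a1 r * cnj (f a2 r))"

lemma out_state_T: "out_state x y z f g a r b s = (\<Sum>a'<2. Tm x y z g a b s a' * f a' r)"
  unfolding out_state_def Tm_def by (simp add: sum2 algebra_simps)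

lemma red_expand:
  assumes "i < 2*n" "j < 2*n"
  shows "reduced_BR m n (out_state x y z f g) $$ (i,j) =
    (\<Sum>a<2. \<Sum>a1<2. \<Sum>a2<2. Tm x y z g a (i div n) (i mod n) a1 * cnj (Tm x y z g a (j div n) (j mod n) a2) * Gm m f a1 a2)"
  using assms unfolding reduced_BR_def out_state_T Gm_def
  by (simp add: sum2 sum_distrib_left sum_distrib_right sum.distrib algebra_simps)



lemma Tm_phi_zero:
  assumes "a < 2" "b < 2" "s < 2" "a' < 2" "odd (a + b + s + a')"
  shows "Tm x y z (phi_state \<beta>) a b s a' = 0"
proof -
  have "s = 0 \<or> s = 1" using assms by auto
  then show ?thesis
  proof
    assume s: "s = 0"
    have "Uent x y z a b a' 0 = 0" by (rule uent_parity) (use assms s in auto)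
    then show ?thesis using s by (simp add: Tm_def sum2 phi_state_def)
  next
    assume s: "s = 1"
    have "Uent x y z a b a' 1 = 0" by (rule uent_parity) (use assms s in auto)
    then show ?thesis using s by (simp add: Tm_def sum2 phi_state_def)
  qed
qed

lemma cis_cnj1: "cis t * cnj (cis t) = 1"
  by (simp add: complex_eq_iff power2_eq_square[symmetric])

lemma G_psi: "Gm 2 (psi_state \<alpha> \<theta> \<mu>) 0 0 = (cos \<alpha>)^2"
  "Gm 2 (psi_state \<alpha> \<theta> \<mu>) 1 1 = (sin \<alpha>)^2"
proof -
  show "Gm 2 (psi_state \<alpha> \<theta> \<mu>) 0 0 = (cos \<alpha>)^2"
    by (simp add: Gm_def sum2 psi_state_def power2_eq_square)
  have "Gm 2 (psi_state \<alpha> \<theta> \<mu>) 1 1 = of_real (sin \<alpha> * cos \<mu>) * of_real (sin \<alpha> * cos \<mu>) * (cis \<theta> * cnj (cis \<theta>))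
     + of_real (sin \<alpha> * sin \<mu>) * of_real (sin \<alpha> * sin \<mu>)"
    by (simp add: Gm_def sum2 psi_state_def)
  also have "\<dots> = of_real ((sin \<alpha> * cos \<mu>) * (sin \<alpha> * cos \<mu>) + (sin \<alpha> * sin \<mu>) * (sin \<alpha> * sin \<mu>))"
    unfolding cis_cnj1 by simp
  also have "(sin \<alpha> * cos \<mu>) * (sin \<alpha> * cos \<mu>) + (sin \<alpha> * sin \<mu>) * (sin \<alpha> * sin \<mu>) = (sin \<alpha>)^2 * ((cos \<mu>)^2 + (sin \<mu>)^2)"
    by (simp only: power2_eq_square distrib_left mult.assoc mult.commute mult.left_commute)
  also have "\<dots> = (sin \<alpha>)^2" by simp
  finally show "Gm 2 (psi_state \<alpha> \<theta> \<mu>) 1 1 = (sin \<alpha>)^2" .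
qed

lemma G_phi: "Gm 2 (phi_state \<alpha>) 0 0 = (cos \<alpha>)^2"
  "Gm 2 (phi_state \<alpha>) 1 1 = (sin \<alpha>)^2"
  "Gm 2 (phi_state \<alpha>) 0 1 = 0" "Gm 2 (phi_state \<alpha>) 1 0 = 0"
  by (simp_all add: Gm_def sum2 phi_state_def power2_eq_square)

lemma pinch_entry:
  assumes "i < 4" "j < 4"
  shows "reduced_BR 2 2 (out_state x y z (phi_state \<alpha>) (phi_state \<beta>)) $$ (i,j) =
    (if even (i div 2 + i mod 2 + j div 2 + j mod 2)
     then reduced_BR 2 2 (out_state x y z (psi_state \<alpha> \<theta> \<mu>) (phi_state \<beta>)) $$ (i,j) else 0)"
proof -
  define bi where "bi = i div 2"
  define si where "si = i mod 2"
  define bj where "bj = j div 2"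
  define sj where "sj = j mod 2"
  have lt: "bi < 2" "si < 2" "bj < 2" "sj < 2" using assms unfolding bi_def si_def bj_def sj_def by auto
  let ?T = "Tm x y z (phi_state \<beta>)"
  have e1: "reduced_BR 2 2 (out_state x y z (phi_state \<alpha>) (phi_state \<beta>)) $$ (i,j) =
     (\<Sum>a<2. ?T a bi si 0 * cnj (?T a bj sj 0) * (cos \<alpha>)^2 + ?T a bi si 1 * cnj (?T a bj sj 1) * (sin \<alpha>)^2)"
    using assms unfolding bi_def si_def bj_def sj_def
    by (subst red_expand) (simp_all add: sum2 G_phi G_phi[unfolded One_nat_def])
  have e2: "reduced_BR 2 2 (out_state x y z (psi_state \<alpha> \<theta> \<mu>) (phi_state \<beta>)) $$ (i,j) =
     (\<Sum>a<2. ?T a bi si 0 * cnj (?T a bj sj 0) * (cos \<alpha>)^2 + ?T a bi si 1 * cnj (?T a bj sj 1) * (sin \<alpha>)^2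
        + (?T a bi si 0 * cnj (?T a bj sj 1) * Gm 2 (psi_state \<alpha> \<theta> \<mu>) 0 1
        + ?T a bi si 1 * cnj (?T a bj sj 0) * Gm 2 (psi_state \<alpha> \<theta> \<mu>) 1 0))"
    using assms unfolding bi_def si_def bj_def sj_def
    by (subst red_expand) (simp_all add: sum2 G_psi G_psi[unfolded One_nat_def] algebra_simps)
  show ?thesis
  proof (cases "even (bi + si + bj + sj)")
    case True
    have z: "?T a bi si 0 * cnj (?T a bj sj 1) = 0 \<and> ?T a bi si 1 * cnj (?T a bj sj 0) = 0" if "a < 2" for a
    proof (cases "even (a + bi + si)")
      case True
      then have "?T a bj sj 1 = 0" "?T a bi si 1 = 0"
        using \<open>even (bi + si + bj + sj)\<close> lt that by (auto intro!: Tm_phi_zero)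
      then show ?thesis by simp
    next
      case False
      then have "?T a bj sj 0 = 0" "?T a bi si 0 = 0"
        using \<open>even (bi + si + bj + sj)\<close> lt that by (auto intro!: Tm_phi_zero)
      then show ?thesis by simp
    qed
    show ?thesis using True unfolding e1 e2 bi_def[symmetric] si_def[symmetric] bj_def[symmetric] sj_def[symmetric]
      using z[of 0] z[of 1] by (auto simp: sum2)
  next
    case False
    have z: "?T a bi si 0 * cnj (?T a bj sj 0) = 0 \<and> ?T a bi si 1 * cnj (?T a bj sj 1) = 0" if "a < 2" for a
    proof (cases "even (a + bi + si)")
      case True
      then have "?T a bj sj 0 = 0" "?T a bi si 1 = 0"
        using \<open>\<not> even (bi + si + bj + sj)\<close> lt that by (auto intro!: Tm_phi_zero)
      then show ?thesis by simp
    next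
      case False
      then have "?T a bj sj 1 = 0" "?T a bi si 0 = 0"
        using \<open>\<not> even (bi + si + bj + sj)\<close> lt that by (auto intro!: Tm_phi_zero)
      then show ?thesis by simp
    qed
    show ?thesis using False unfolding e1 bi_def[symmetric] si_def[symmetric] bj_def[symmetric] sj_def[symmetric]
      using z[of 0] z[of 1] by (auto simp: sum2)
  qed
qed



definition adj :: "complex mat \<Rightarrow> complex mat" where
  "adj A = mat (dim_col A) (dim_row A) (\<lambda>(i,j). cnj (A $$ (j,i)))"

lemma adj_dims[simp]: "dim_row (adj A) = dim_col A" "dim_col (adj A) = dim_row A"
  unfolding adj_def by simp_all

lemma adj_index[simp]: "i < dim_col A \<Longrightarrow> j < dim_row A \<Longrightarrow> adj A $$ (i,j) = cnj (A $$ (j,i))"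
  unfolding adj_def by simp
lemma adj_carrier[simp]: "A \<in> carrier_mat n m \<Longrightarrow> adj A \<in> carrier_mat m n"
  unfolding carrier_mat_def by simp

lemma adj_adj[simp]: "adj (adj A) = A"
  by (rule eq_matI) simp_all

lemma adj_mult: assumes "A \<in> carrier_mat n k" "B \<in> carrier_mat k m"
  shows "adj (A * B) = adj B * adj A"
proof (rule eq_matI)
  fix i j assume "i < dim_row (adj B * adj A)" "j < dim_col (adj B * adj A)"
  then have i: "i < m" and j: "j < n" using assms by auto
  show "adj (A * B) $$ (i, j) = (adj B * adj A) $$ (i, j)"
    using assms i j by (simp add: scalar_prod_def cnj_sum mult.commute)
qed (use assms in simp_all)

lemma adj_one[simp]: "adj (1\<^sub>m n) = 1\<^sub>m n"
  by (rule eq_matI) simp_all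

lemma adj_zero[simp]: "adj (0\<^sub>m n m) = 0\<^sub>m m n"
  by (rule eq_matI) simp_all

lemma adj_four_block: assumes "A \<in> carrier_mat n1 m1" "B \<in> carrier_mat n1 m2" "C \<in> carrier_mat n2 m1" "D \<in> carrier_mat n2 m2"
  shows "adj (four_block_mat A B C D) = four_block_mat (adj A) (adj C) (adj B) (adj D)"
  by (rule eq_matI) (use assms in simp_all)
lemma zcnj: "z * cnj z = (complex_of_real (cmod z))^2"
  by (metis complex_norm_square of_real_power)

lemma cself: assumes "w \<in> carrier_vec n" shows "w \<bullet>c w = of_real (\<Sum>k<n. (cmod (w$k))^2)"
  using assms by (simp add: scalar_prod_def zcnj lessThan_atLeast0)

lemma unitary_completion:
  assumes v: "v \<in> carrier_vec n" and v0: "v \<noteq> 0\<^sub>v n"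
  shows "\<exists>N \<in> carrier_mat n n. adj N * N = 1\<^sub>m n \<and> (\<exists>c. col N 0 = c \<cdot>\<^sub>v v)"
proof -
  interpret cof_vec_space n "TYPE(complex)" .
  define b where "b = basis_completion v"
  define ws where "ws = gram_schmidt n b"
  from basis_completion[OF v v0, folded b_def]
  have span_b: "span (set b) = carrier_vec n" and dist_b: "distinct b" 
    and indep: "\<not> lin_dep (set b)" and b: "set b \<subseteq> carrier_vec n" and hdb: "hd b = v" 
    and len_b: "length b = n" by auto
  have n: "n \<noteq> 0" using v0 v by auto
  from hdb len_b n obtain vs where bv: "b = v # vs" by (cases b, auto)
  from gram_schmidt_result[OF b dist_b indep refl, folded ws_def]
  have ws: "set ws \<subseteq> carrier_vec n" "corthogonal ws" "length ws = n" 
    by (auto simp: len_b)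
  from gram_schmidt_hd[OF v, of vs, folded bv] have hdws: "hd ws = v" unfolding ws_def .
  define r where "r i = Re (ws!i \<bullet>c ws!i)" for i
  define c where "c i = (complex_of_real (1 / sqrt (r i)))" for i
  have wsc: "ws ! i \<in> carrier_vec n" if "i < n" for i using ws that by auto
  have rpos: "r i > 0" and rr: "ws!i \<bullet>c ws!i = of_real (r i)" if "i < n" for i
  proof -
    have "ws!i \<bullet>c ws!i \<noteq> 0" using corthogonalD[OF ws(2), of i i] ws(3) that by simp
    moreover have e: "ws!i \<bullet>c ws!i = of_real (\<Sum>k<n. (cmod (ws!i$k))^2)" by (rule cself[OF wsc[OF that]])
    ultimately have "(\<Sum>k<n. (cmod (ws!i$k))^2) \<noteq> 0" by (metis of_real_0)
    moreover have "(\<Sum>k<n. (cmod (ws!i$k))^2) \<ge> 0" by (intro sum_nonneg) auto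
    ultimately show "r i > 0" unfolding r_def e by auto
    show "ws!i \<bullet>c ws!i = of_real (r i)" unfolding r_def e by simp
  qed
  define us where "us = map (\<lambda>i. c i \<cdot>\<^sub>v ws!i) [0..<n]"
  define N where "N = mat_of_cols n us"
  have N: "N \<in> carrier_mat n n" unfolding N_def us_def by auto
  have Nidx: "N $$ (k,i) = c i * (ws!i $ k)" if "k < n" "i < n" for k i
    using that wsc[OF that(2)] by (simp add: N_def us_def mat_of_cols_index)
  have "adj N * N = 1\<^sub>m n"
  proof (rule eq_matI)
    fix i j assume i: "i < dim_row (1\<^sub>m n :: complex mat)" and j: "j < dim_col (1\<^sub>m n :: complex mat)"
    then have i: "i < n" and j: "j < n" by auto
    have "(adj N * N) $$ (i,j) = (\<Sum>k\<in>{0..<n}. cnj (N $$ (k,i)) * N $$ (k,j))"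
      using N i j by (simp add: scalar_prod_def)
    also have "\<dots> = (\<Sum>k\<in>{0..<n}. c i * c j * (ws!j$k * cnj (ws!i$k)))"
      by (rule sum.cong) (simp_all add: Nidx i j c_def)
    also have "\<dots> = c i * c j * (ws!j \<bullet>c ws!i)"
      using wsc[OF i] by (simp add: scalar_prod_def sum_distrib_left)
    also have "\<dots> = (1\<^sub>m n) $$ (i,j)"
    proof (cases "i = j")
      case True
      have "c i * c i * complex_of_real (r i) = complex_of_real (1 / sqrt (r i) * (1 / sqrt (r i)) * r i)"
        by (simp only: c_def of_real_mult)
      also have "1 / sqrt (r i) * (1 / sqrt (r i)) * r i = 1"
        using rpos[OF i] by (simp add: field_simps)
      finally show ?thesis using True rr[OF i] i by simp
    next
      case False
      then have "ws!j \<bullet>c ws!i = 0" using corthogonalD[OF ws(2), of j i] ws(3) i j by simp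
      then show ?thesis using False i j by simp
    qed
    finally show "(adj N * N) $$ (i,j) = (1\<^sub>m n) $$ (i,j)" .
  qed (use N in auto)
  moreover have "col N 0 = c 0 \<cdot>\<^sub>v v"
  proof -
    have "ws ! 0 = v" using hdws ws(3) n by (cases ws) auto
    then show ?thesis using n wsc[of 0] by (simp add: N_def us_def)
  qed
  ultimately show ?thesis using N by blast
qed


lemma eigen_exists:
  assumes A: "(A::complex mat) \<in> carrier_mat (Suc m) (Suc m)"
  shows "\<exists>e. eigenvalue A e"
proof -
  have "degree (char_poly A) = Suc m" using degree_monic_char_poly[OF A] by simp
  then have "\<not> constant (poly (char_poly A))" by (simp add: constant_degree)
  then obtain e where "poly (char_poly A) e = 0" using fundamental_theorem_of_algebra by blast
  then show ?thesis using eigenvalue_root_char_poly[OF A] by blast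
qed

theorem spectral:
  assumes "A \<in> carrier_mat n n" "adj A = A"
  shows "\<exists>W D. W \<in> carrier_mat n n \<and> D \<in> carrier_mat n n \<and> diagonal_mat D \<and>
     adj W * W = 1\<^sub>m n \<and> W * adj W = 1\<^sub>m n \<and> A = W * D * adj W"
  using assms
proof (induction n arbitrary: A)
  case 0
  then have A: "A \<in> carrier_mat 0 0" by simp
  have "A = 1\<^sub>m 0 * A * adj (1\<^sub>m 0)" using A by simp
  moreover have "diagonal_mat A" using A by (simp add: diagonal_mat_def)
  ultimately show ?case using A by (intro exI[of _ "1\<^sub>m 0"] exI[of _ A]) simp
next
  case (Suc m)
  from Suc.prems have A: "A \<in> carrier_mat (Suc m) (Suc m)" and hA: "adj A = A" by simp_all
  obtain e where "eigenvalue A e" using eigen_exists[OF A] by blast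
  define v where "v = find_eigenvector A e"
  have ev: "eigenvector A v e" using find_eigenvector[OF A \<open>eigenvalue A e\<close>] v_def by simp
  then have v: "v \<in> carrier_vec (Suc m)" "v \<noteq> 0\<^sub>v (Suc m)" "A *\<^sub>v v = e \<cdot>\<^sub>v v"
    using A unfolding eigenvector_def by simp_all
  obtain N c where N: "N \<in> carrier_mat (Suc m) (Suc m)" "adj N * N = 1\<^sub>m (Suc m)" "col N 0 = c \<cdot>\<^sub>v v"
    using unitary_completion[OF v(1,2)] by blast
  have NN: "N * adj N = 1\<^sub>m (Suc m)"
    using mat_mult_left_right_inverse[OF adj_carrier[OF N(1)] N(1) N(2)] .
  define A' where "A' = adj N * A * N"
  have A': "A' \<in> carrier_mat (Suc m) (Suc m)" using N A unfolding A'_def by (metis adj_carrier mult_carrier_mat)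
  have hA': "adj A' = A'"
    unfolding A'_def using N A hA
    by (simp add: adj_mult[of _ "Suc m" "Suc m" _ "Suc m"] assoc_mult_mat[of _ "Suc m" "Suc m" _ "Suc m" _ "Suc m"])
  have colAN: "col (A * N) 0 = e \<cdot>\<^sub>v col N 0"
  proof -
    have "col (A * N) 0 = A *\<^sub>v col N 0" by (rule col_mult2[OF A N(1)]) simp
    also have "\<dots> = A *\<^sub>v (c \<cdot>\<^sub>v v)" unfolding N(3) ..
    also have "\<dots> = c \<cdot>\<^sub>v (A *\<^sub>v v)" by (rule mult_mat_vec[OF A v(1)])
    also have "\<dots> = c \<cdot>\<^sub>v (e \<cdot>\<^sub>v v)" unfolding v(3) ..
    also have "\<dots> = e \<cdot>\<^sub>v (c \<cdot>\<^sub>v v)" by (metis smult_smult_assoc mult.commute)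
    also have "\<dots> = e \<cdot>\<^sub>v col N 0" unfolding N(3) ..
    finally show ?thesis .
  qed
  have col0: "A' $$ (i,0) = (if i = 0 then e else 0)" if i: "i < Suc m" for i
  proof -
    have "A' = adj N * (A * N)" unfolding A'_def using N A by (simp add: assoc_mult_mat[of _ "Suc m" "Suc m" _ "Suc m" _ "Suc m"])
    then have "A' $$ (i,0) = row (adj N) i \<bullet> col (A * N) 0" using N A i by simp
    also have "\<dots> = e * (row (adj N) i \<bullet> col N 0)" unfolding colAN using N(1) i by simp
    also have "row (adj N) i \<bullet> col N 0 = (adj N * N) $$ (i,0)" using N(1) i by simp
    also have "\<dots> = (if i = 0 then 1 else 0)" unfolding N(2) using i by simp
    finally show ?thesis by simp
  qed
  have row0: "A' $$ (0,j) = (if j = 0 then e else 0)" if j: "j < Suc m" for j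
  proof -
    have "A' $$ (0,j) = adj A' $$ (0,j)" using hA' by simp
    also have "\<dots> = cnj (A' $$ (j,0))" using A' j by simp
    finally show ?thesis using col0[OF j] col0[of 0] A' by (cases "j = 0") simp_all
  qed
  define A3 where "A3 = mat m m (\<lambda>(i,j). A' $$ (Suc i, Suc j))"
  have A3: "A3 \<in> carrier_mat m m" unfolding A3_def by simp
  have hA3: "adj A3 = A3"
  proof (rule eq_matI)
    fix i j assume "i < dim_row A3" "j < dim_col A3"
    then have i: "i < m" and j: "j < m" using A3 by simp_all
    have "adj A3 $$ (i,j) = cnj (A' $$ (Suc j, Suc i))" using i j by (simp add: A3_def)
    also have "\<dots> = adj A' $$ (Suc i, Suc j)" using A' i j by simp
    also have "\<dots> = A3 $$ (i,j)" using hA' i j by (simp add: A3_def)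
    finally show "adj A3 $$ (i,j) = A3 $$ (i,j)" .
  qed (use A3 in simp_all)
  define E where "E = mat 1 1 (\<lambda>_. e)"
  have E: "E \<in> carrier_mat 1 1" unfolding E_def by simp
  have A'blk: "A' = four_block_mat E (0\<^sub>m 1 m) (0\<^sub>m m 1) A3"
  proof (rule eq_matI)
    fix i j assume "i < dim_row (four_block_mat E (0\<^sub>m 1 m) (0\<^sub>m m 1) A3)" "j < dim_col (four_block_mat E (0\<^sub>m 1 m) (0\<^sub>m m 1) A3)"
    then have i: "i < Suc m" and j: "j < Suc m" using E A3 by simp_all
    show "A' $$ (i,j) = four_block_mat E (0\<^sub>m 1 m) (0\<^sub>m m 1) A3 $$ (i,j)"
    proof (cases "i = 0")
      case True
      then show ?thesis using row0[OF j] i j E A3 by (simp add: E_def)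
    next
      case False
      then obtain i' where i': "i = Suc i'" by (cases i) simp_all
      show ?thesis
      proof (cases "j = 0")
        case True
        then show ?thesis using col0[OF i] i j E A3 i' by simp
      next
        case False
        then obtain j' where j': "j = Suc j'" by (cases j) simp_all
        show ?thesis using i j E A3 i' j' by (simp add: A3_def)
      qed
    qed
  qed (use A' E A3 in simp_all)
  obtain W3 D3 where W3: "W3 \<in> carrier_mat m m" "D3 \<in> carrier_mat m m" "diagonal_mat D3"
      "adj W3 * W3 = 1\<^sub>m m" "W3 * adj W3 = 1\<^sub>m m" "A3 = W3 * D3 * adj W3"
    using Suc.IH[OF A3 hA3] by blast
  define B where "B = four_block_mat (1\<^sub>m 1) (0\<^sub>m 1 m) (0\<^sub>m m 1) W3"
  define D where "D = four_block_mat E (0\<^sub>m 1 m) (0\<^sub>m m 1) D3"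
  define W where "W = N * B"
  have B: "B \<in> carrier_mat (Suc m) (Suc m)" unfolding B_def using four_block_carrier_mat[OF _ W3(1), of "1\<^sub>m 1" 1 1] by simp
  have D: "D \<in> carrier_mat (Suc m) (Suc m)" unfolding D_def using four_block_carrier_mat[OF E W3(2)] by simp
  have W: "W \<in> carrier_mat (Suc m) (Suc m)" unfolding W_def using N B by simp
  have adjB: "adj B = four_block_mat (1\<^sub>m 1) (0\<^sub>m 1 m) (0\<^sub>m m 1) (adj W3)"
    unfolding B_def by (subst adj_four_block[of _ 1 1 _ m _ m]) (use W3 in simp_all)
  have BB: "adj B * B = 1\<^sub>m (Suc m)"
    unfolding adjB unfolding B_def
    by (subst mult_four_block_mat[of _ 1 1 _ m _ m _ _ 1 _ m]) (use W3 in simp_all)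
  have BDB: "B * D * adj B = A'"
  proof -
    have BD: "B * D = four_block_mat E (0\<^sub>m 1 m) (0\<^sub>m m 1) (W3 * D3)"
      unfolding B_def D_def
      by (subst mult_four_block_mat[of _ 1 1 _ m _ m _ _ 1 _ m]) (use W3 E in simp_all)
    have "B * D * adj B = four_block_mat E (0\<^sub>m 1 m) (0\<^sub>m m 1) (W3 * D3 * adj W3)"
      unfolding adjB BD
      by (subst mult_four_block_mat[of _ 1 1 _ m _ m _ _ 1 _ m]) (use W3 E A3[unfolded W3(6)] in \<open>simp_all add: left_add_zero_mat\<close>)
    then show ?thesis using A'blk W3(6) by simp
  qed
  have WW: "adj W * W = 1\<^sub>m (Suc m)"
  proof -
    have "adj W * W = adj B * (adj N * (N * B))"
      unfolding W_def using N(1) B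
      by (simp add: adj_mult[of _ "Suc m" "Suc m" _ "Suc m"] assoc_mult_mat[of _ "Suc m" "Suc m" _ "Suc m" _ "Suc m"])
    also have "adj N * (N * B) = (adj N * N) * B"
      using N(1) B by (simp add: assoc_mult_mat[of _ "Suc m" "Suc m" _ "Suc m" _ "Suc m"])
    also have "\<dots> = B" using N(2) B by simp
    finally show ?thesis using BB by simp
  qed
  have WW2: "W * adj W = 1\<^sub>m (Suc m)"
    using mat_mult_left_right_inverse[OF adj_carrier[OF W] W WW] .
  have cs: "B * D \<in> carrier_mat (Suc m) (Suc m)" "adj B * adj N \<in> carrier_mat (Suc m) (Suc m)"
    "N * B \<in> carrier_mat (Suc m) (Suc m)" "B * D * adj B \<in> carrier_mat (Suc m) (Suc m)"
    "N * B * D \<in> carrier_mat (Suc m) (Suc m)" "D * adj B \<in> carrier_mat (Suc m) (Suc m)"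
    "adj N * A \<in> carrier_mat (Suc m) (Suc m)"  "N * adj N \<in> carrier_mat (Suc m) (Suc m)"
    "N * adj N * A \<in> carrier_mat (Suc m) (Suc m)" "adj N * A * N \<in> carrier_mat (Suc m) (Suc m)"
    "N * (adj N * A * N) \<in> carrier_mat (Suc m) (Suc m)" "A * N \<in> carrier_mat (Suc m) (Suc m)"
    "D * (adj B * adj N) \<in> carrier_mat (Suc m) (Suc m)" "B * (D * (adj B * adj N)) \<in> carrier_mat (Suc m) (Suc m)"
    "D * adj B * adj N \<in> carrier_mat (Suc m) (Suc m)" "A * N * adj N \<in> carrier_mat (Suc m) (Suc m)"
    "A * (N * adj N) \<in> carrier_mat (Suc m) (Suc m)"
    using N(1) B D A by (meson adj_carrier mult_carrier_mat)+
  have "W * D * adj W = N * (B * D * adj B) * adj N"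
    unfolding W_def using N(1) B D cs
    by (simp add: adj_mult[of _ "Suc m" "Suc m" _ "Suc m"] assoc_mult_mat[of _ "Suc m" "Suc m" _ "Suc m" _ "Suc m"])
  also have "\<dots> = (N * adj N) * A * (N * adj N)"
    unfolding BDB A'_def using N(1) A cs
    by (simp add: assoc_mult_mat[of _ "Suc m" "Suc m" _ "Suc m" _ "Suc m"])
  also have "\<dots> = A" using NN A by simp
  finally have AWDW: "A = W * D * adj W" ..
  have dD: "diagonal_mat D"
    unfolding diagonal_mat_def
  proof (intro allI impI)
    fix i j assume i: "i < dim_row D" and j: "j < dim_col D" and ij: "i \<noteq> j"
    show "D $$ (i,j) = 0"
      using i j ij W3(2,3) E unfolding D_def diagonal_mat_def
      by (cases i; cases j) (simp_all add: E_def)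
  qed
  show ?case using W D dD WW WW2 AWDW by blast
qed


definition eta :: "real \<Rightarrow> real" where
  "eta t = (if t > 0 then - t * log 2 t else 0)"

lemma proots_linear_prod: "proots (\<Prod>a \<leftarrow> es. [:- a, 1:]) = mset (es :: complex list)"
proof (induction es)
  case Nil then show ?case by simp
next
  case (Cons a es)
  have nz: "(\<Prod>a \<leftarrow> es. [:- a, 1:]) \<noteq> (0 :: complex poly)"
  proof -
    have "(0::complex poly) \<notin> set (map (\<lambda>a. [:- a, 1:]) es)" by (induction es) simp_all
    then show ?thesis by (simp only: prod_list_zero_iff) simp
  qed
  show ?case unfolding list.map prod_list.Cons
    by (subst proots_mult[OF _ nz]) (simp_all add: Cons.IH)
qed

lemma ent_spectral:
  assumes A: "A \<in> carrier_mat n n" and W: "W \<in> carrier_mat n n" and D: "D \<in> carrier_mat n n"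
    and dD: "diagonal_mat D" and WW: "adj W * W = 1\<^sub>m n" "W * adj W = 1\<^sub>m n" and AW: "A = W * D * adj W"
  shows "vn_entropy A = (\<Sum>k<n. eta (Re (D $$ (k,k))))"
proof -
  have "similar_mat_wit A D W (adj W)"
    unfolding similar_mat_wit_def Let_def using A W D WW AW by simp
  then have "similar_mat A D" unfolding similar_mat_def by blast
  then have cp: "char_poly A = char_poly D" by (rule char_poly_similar)
  have ut: "upper_triangular D" using dD D unfolding upper_triangular_def diagonal_mat_def by simp
  have "char_poly D = (\<Prod>a \<leftarrow> diag_mat D. [:- a, 1:])" by (rule char_poly_upper_triangular[OF D ut])
  then have pr: "proots (char_poly A) = mset (diag_mat D)" using cp proots_linear_prod by simp
  have "vn_entropy A = sum_list (map (\<lambda>ev. eta (Re ev)) (diag_mat D))"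
    unfolding vn_entropy_def pr eta_def by (simp add: sum_mset_sum_list flip: mset_map)
  also have "\<dots> = (\<Sum>k<n. eta (Re (D $$ (k,k))))"
    using D by (simp add: diag_mat_def sum_set_upt_conv_sum_list_nat[symmetric] lessThan_atLeast0 comp_def)
  finally show ?thesis .
qed

lemma eta_tangent:
  assumes m: "m > 0" and x: "x \<ge> 0"
  shows "eta x \<le> eta m - (ln m + 1) / ln 2 * (x - m)"
proof (cases "x = 0")
  case True
  have "eta m - (ln m + 1) / ln 2 * (x - m) = m / ln 2"
    using m True by (simp add: eta_def log_def field_simps)
  also have "\<dots> \<ge> 0" using m by simp
  finally show ?thesis using True by (simp add: eta_def)
next
  case False
  then have xp: "x > 0" using x by simp
  have "ln (m / x) \<le> m / x - 1" using ln_le_minus_one m xp by simp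
  then have "ln m - ln x \<le> m / x - 1" using m xp by (simp add: ln_div)
  then have "x * (ln m - ln x) \<le> x * (m / x - 1)" using xp by (simp add: mult_left_mono)
  moreover have "x * (m / x - 1) = m - x" using xp by (simp add: field_simps)
  moreover have "x * (ln m - ln x) = x * ln m - x * ln x" by (simp add: algebra_simps)
  ultimately have key: "x * ln m - x * ln x \<le> m - x" by linarith
  have "eta m - (ln m + 1) / ln 2 * (x - m) - eta x = (x * ln x - x * ln m - x + m) / ln 2"
    using m xp by (simp add: eta_def log_def field_simps)
  also have "\<dots> \<ge> 0" using key by simp
  finally show ?thesis by simp
qed

lemma eta_jensen:
  assumes fin: "finite K" and p: "\<And>k. k \<in> K \<Longrightarrow> p k \<ge> 0" and ps: "(\<Sum>k\<in>K. p k) = 1"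
    and x: "\<And>k. k \<in> K \<Longrightarrow> x k \<ge> 0"
  shows "(\<Sum>k\<in>K. p k * eta (x k)) \<le> eta (\<Sum>k\<in>K. p k * x k)"
proof -
  define m where "m = (\<Sum>k\<in>K. p k * x k)"
  have m0: "m \<ge> 0" unfolding m_def using p x by (intro sum_nonneg) simp
  show ?thesis
  proof (cases "m = 0")
    case True
    have h: "p k * x k = 0" if "k \<in> K" for k
      using True sum_nonneg_eq_0_iff[OF fin, of "\<lambda>k. p k * x k"] p x that unfolding m_def by simp
    have "p k * eta (x k) = 0" if "k \<in> K" for k
      using h[OF that] by (cases "p k = 0") (simp_all add: eta_def)
    then have "(\<Sum>k\<in>K. p k * eta (x k)) = 0" by simp
    then show ?thesis using True unfolding m_def by (simp add: eta_def)
  next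
    case False
    then have mp: "m > 0" using m0 by simp
    define c where "c = (ln m + 1) / ln 2"
    have "(\<Sum>k\<in>K. p k * eta (x k)) \<le> (\<Sum>k\<in>K. p k * (eta m - c * (x k - m)))"
      using eta_tangent[OF mp x] p unfolding c_def by (intro sum_mono mult_left_mono) simp_all
    also have "\<dots> = (\<Sum>k\<in>K. eta m * p k - c * (p k * x k) + (c * m) * p k)"
      by (rule sum.cong) (simp_all add: algebra_simps)
    also have "\<dots> = eta m * (\<Sum>k\<in>K. p k) - c * (\<Sum>k\<in>K. p k * x k) + (c * m) * (\<Sum>k\<in>K. p k)"
      by (simp add: sum.distrib sum_subtractf sum_distrib_left)
    also have "\<dots> = eta m" using ps unfolding m_def by simp
    finally show ?thesis unfolding m_def .
  qed
qed


definition unitary :: "nat \<Rightarrow> complex mat \<Rightarrow> bool" where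
  "unitary n U \<longleftrightarrow> U \<in> carrier_mat n n \<and> adj U * U = 1\<^sub>m n \<and> U * adj U = 1\<^sub>m n"

lemma sq_mult_carrier[simp]: "A \<in> carrier_mat n n \<Longrightarrow> B \<in> carrier_mat n n \<Longrightarrow> A * B \<in> carrier_mat n n"
  by (rule mult_carrier_mat)

lemma sqa: "A \<in> carrier_mat n n \<Longrightarrow> B \<in> carrier_mat n n \<Longrightarrow> C \<in> carrier_mat n n \<Longrightarrow> A * B * C = A * (B * C)"
  by (rule assoc_mult_mat)

lemma unitary_adj: "unitary n U \<Longrightarrow> unitary n (adj U)"
  unfolding unitary_def by simp

lemma unitary_mult:
  assumes U1: "unitary n U1" and U2: "unitary n U2"
  shows "unitary n (U1 * U2)"
proof -
  have c1: "U1 \<in> carrier_mat n n" and c2: "U2 \<in> carrier_mat n n" using U1 U2 unfolding unitary_def by simp_all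
  have a: "adj (U1 * U2) = adj U2 * adj U1" using c1 c2 by (rule adj_mult)
  have "adj U2 * adj U1 * (U1 * U2) = adj U2 * (adj U1 * (U1 * U2))"
    using c1 c2 by (intro sqa[of _ n]) simp_all
  also have "adj U1 * (U1 * U2) = adj U1 * U1 * U2" using c1 c2 by (intro sqa[of _ n, symmetric]) simp_all
  also have "\<dots> = U2" using U1 c2 unfolding unitary_def by simp
  finally have e1: "adj (U1 * U2) * (U1 * U2) = 1\<^sub>m n" using U2 unfolding a unitary_def by simp
  have "U1 * U2 * (adj U2 * adj U1) = U1 * (U2 * (adj U2 * adj U1))"
    using c1 c2 by (intro sqa[of _ n]) simp_all
  also have "U2 * (adj U2 * adj U1) = U2 * adj U2 * adj U1" using c1 c2 by (intro sqa[of _ n, symmetric]) simp_all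
  also have "\<dots> = adj U1" using U2 c1 unfolding unitary_def by simp
  finally have e2: "(U1 * U2) * adj (U1 * U2) = 1\<^sub>m n" using U1 unfolding a unitary_def by simp
  show ?thesis using e1 e2 c1 c2 unfolding unitary_def by simp
qed

lemma gram_diag:
  assumes H: "H \<in> carrier_mat p n" and k: "k < n"
  shows "(adj H * H) $$ (k,k) = of_real (\<Sum>l<p. (cmod (H $$ (l,k)))^2)"
  using H k by (simp add: scalar_prod_def lessThan_atLeast0 zcnj mult.commute)

lemma row_norm:
  assumes U: "unitary n Q" and i: "i < n"
  shows "(\<Sum>k<n. (cmod (Q $$ (i,k)))^2) = 1"
proof -
  have c: "Q \<in> carrier_mat n n" using U unfolding unitary_def by simp
  have "(Q * adj Q) $$ (i,i) = of_real (\<Sum>k<n. (cmod (Q $$ (i,k)))^2)"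
    using c i by (simp add: scalar_prod_def lessThan_atLeast0 zcnj)
  moreover have "(Q * adj Q) $$ (i,i) = 1" using U i unfolding unitary_def by simp
  ultimately show ?thesis by (metis of_real_eq_1_iff)
qed

lemma col_norm:
  assumes U: "unitary n Q" and k: "k < n"
  shows "(\<Sum>i<n. (cmod (Q $$ (i,k)))^2) = 1"
proof -
  have c: "Q \<in> carrier_mat n n" using U unfolding unitary_def by simp
  have "(adj Q * Q) $$ (k,k) = of_real (\<Sum>i<n. (cmod (Q $$ (i,k)))^2)"
    using gram_diag[OF c k] .
  moreover have "(adj Q * Q) $$ (k,k) = 1" using U k unfolding unitary_def by simp
  ultimately show ?thesis by (metis of_real_eq_1_iff)
qed

lemma diag_conj_entry:
  assumes Q: "Q \<in> carrier_mat n n" and L: "L \<in> carrier_mat n n" and dL: "diagonal_mat L" and i: "i < n"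
  shows "(Q * L * adj Q) $$ (i,i) = (\<Sum>k<n. of_real ((cmod (Q $$ (i,k)))^2) * L $$ (k,k))"
proof -
  have QL: "(Q * L) $$ (i,k) = Q $$ (i,k) * L $$ (k,k)" if k: "k < n" for k
  proof -
    have "(Q * L) $$ (i,k) = (\<Sum>l\<in>{0..<n}. Q $$ (i,l) * L $$ (l,k))"
      using Q L i k by (simp add: scalar_prod_def)
    also have "\<dots> = (\<Sum>l\<in>{0..<n}. (if l = k then Q $$ (i,k) * L $$ (k,k) else 0))"
      by (rule sum.cong) (use dL L k in \<open>simp_all add: diagonal_mat_def\<close>)
    also have "\<dots> = Q $$ (i,k) * L $$ (k,k)" using k by simp
    finally show ?thesis .
  qed
  have "(Q * L * adj Q) $$ (i,i) = (\<Sum>k\<in>{0..<n}. (Q * L) $$ (i,k) * cnj (Q $$ (i,k)))"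
    using Q L i by (simp add: scalar_prod_def)
  also have "\<dots> = (\<Sum>k<n. of_real ((cmod (Q $$ (i,k)))^2) * L $$ (k,k))"
    unfolding lessThan_atLeast0
    by (rule sum.cong) (simp_all add: QL zcnj[symmetric] algebra_simps)
  finally show ?thesis .
qed

lemma bil_entry:
  assumes E: "E \<in> carrier_mat n n" and F: "F \<in> carrier_mat n n" and i: "i < n"
  shows "(adj E * F * E) $$ (i,i) = (\<Sum>a<n. \<Sum>b<n. cnj (E $$ (a,i)) * F $$ (a,b) * E $$ (b,i))"
proof -
  have "(adj E * F * E) $$ (i,i) = (\<Sum>b\<in>{0..<n}. (adj E * F) $$ (i,b) * E $$ (b,i))"
    using E F i by (simp add: scalar_prod_def)
  also have "\<dots> = (\<Sum>b\<in>{0..<n}. (\<Sum>a\<in>{0..<n}. cnj (E $$ (a,i)) * F $$ (a,b)) * E $$ (b,i))"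
    by (rule sum.cong) (use E F i in \<open>simp_all add: scalar_prod_def\<close>)
  also have "\<dots> = (\<Sum>a<n. \<Sum>b<n. cnj (E $$ (a,i)) * F $$ (a,b) * E $$ (b,i))"
    unfolding lessThan_atLeast0 sum_distrib_right by (rule sum.swap)
  finally show ?thesis .
qed


lemma pinch_entropy:
  assumes G: "G \<in> carrier_mat p n" and rho: "\<rho> = adj G * G"
    and V: "unitary n V"
    and X: "X \<in> carrier_mat n n"
    and Xe: "\<And>a b. a < n \<Longrightarrow> b < n \<Longrightarrow> X $$ (a,b) = (\<rho> $$ (a,b) + (V * \<rho> * adj V) $$ (a,b)) / 2"
  shows "vn_entropy \<rho> \<le> vn_entropy X"
proof -
  have Vc: "V \<in> carrier_mat n n" using V unfolding unitary_def by simp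
  have rc: "\<rho> \<in> carrier_mat n n" using G rho by (metis adj_carrier mult_carrier_mat)
  have hr: "adj \<rho> = \<rho>" unfolding rho using G by (simp add: adj_mult[of _ n p _ n])
  define R where "R = V * \<rho> * adj V"
  have Rc: "R \<in> carrier_mat n n" unfolding R_def using Vc rc by simp
  have hR: "adj R = R"
    unfolding R_def using Vc rc hr by (simp add: adj_mult[of _ n n _ n] sqa[of _ n])
  have hX: "adj X = X"
  proof (rule eq_matI)
    fix a b assume "a < dim_row X" "b < dim_col X"
    then have a: "a < n" and b: "b < n" using X by simp_all
    have r1: "cnj (\<rho> $$ (b,a)) = \<rho> $$ (a,b)" using arg_cong[OF hr, of "\<lambda>M. M $$ (a,b)"] rc a b by simp
    have r2: "cnj (R $$ (b,a)) = R $$ (a,b)" using arg_cong[OF hR, of "\<lambda>M. M $$ (a,b)"] Rc a b by simp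
    have x1: "X $$ (a,b) = (\<rho> $$ (a,b) + R $$ (a,b)) / 2" using Xe[OF a b] unfolding R_def .
    have x2: "X $$ (b,a) = (\<rho> $$ (b,a) + R $$ (b,a)) / 2" using Xe[OF b a] unfolding R_def .
    have "adj X $$ (a,b) = cnj (X $$ (b,a))" using X a b by simp
    also have "\<dots> = (cnj (\<rho> $$ (b,a)) + cnj (R $$ (b,a))) / 2" unfolding x2 by simp
    also have "\<dots> = X $$ (a,b)" unfolding x1 r1 r2 ..
    finally show "adj X $$ (a,b) = X $$ (a,b)" .
  qed (use X in simp_all)
  obtain W L where WL: "W \<in> carrier_mat n n" "L \<in> carrier_mat n n" "diagonal_mat L"
    "adj W * W = 1\<^sub>m n" "W * adj W = 1\<^sub>m n" "\<rho> = W * L * adj W"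
    using spectral[OF rc hr] by blast
  obtain E M where EM: "E \<in> carrier_mat n n" "M \<in> carrier_mat n n" "diagonal_mat M"
    "adj E * E = 1\<^sub>m n" "E * adj E = 1\<^sub>m n" "X = E * M * adj E"
    using spectral[OF X hX] by blast
  have uW: "unitary n W" and uE: "unitary n E" using WL EM unfolding unitary_def by simp_all
  have e1: "vn_entropy \<rho> = (\<Sum>k<n. eta (Re (L $$ (k,k))))" by (rule ent_spectral[OF rc WL(1,2,3,4,5,6)])
  have e2: "vn_entropy X = (\<Sum>k<n. eta (Re (M $$ (k,k))))" by (rule ent_spectral[OF X EM(1,2,3,4,5,6)])
  have Leq: "L = adj (G * W) * (G * W)"
  proof -
    have "adj W * \<rho> * W = (adj W * W) * L * (adj W * W)"
      unfolding WL(6) using WL(1,2) by (simp add: sqa[of _ n])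
    also have "\<dots> = L" using WL by simp
    finally have "L = adj W * \<rho> * W" ..
    also have "\<dots> = adj W * ((adj G * G) * W)"
      unfolding rho using G WL(1) rc[unfolded rho] by (intro assoc_mult_mat[of _ n n _ n _ n]) simp_all
    also have "(adj G * G) * W = adj G * (G * W)"
      using G WL(1) by (intro assoc_mult_mat[of _ n p _ n _ n]) simp_all
    also have "adj W * (adj G * (G * W)) = (adj W * adj G) * (G * W)"
      using G WL(1) by (intro assoc_mult_mat[of _ n n _ p _ n, symmetric]) (simp_all add: mult_carrier_mat[of _ p n _ n])
    also have "adj W * adj G = adj (G * W)" using G WL(1) by (simp add: adj_mult[of _ p n _ n])
    finally show ?thesis .
  qed
  define lam where "lam k = (\<Sum>l<p. (cmod ((G * W) $$ (l,k)))^2)" for k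
  have lam0: "lam k \<ge> 0" for k unfolding lam_def by (intro sum_nonneg) simp
  have Lkk: "L $$ (k,k) = of_real (lam k)" if "k < n" for k
    unfolding Leq lam_def using gram_diag[of "G * W" p n k] G WL(1) that by simp
  have Meq: "M = adj E * X * E"
  proof -
    have "adj E * X * E = (adj E * E) * M * (adj E * E)"
      unfolding EM(6) using EM(1,2) by (simp add: sqa[of _ n])
    also have "\<dots> = M" using EM by simp
    finally show ?thesis ..
  qed
  define Q where "Q = adj E * W"
  define Q' where "Q' = adj E * V * W"
  have uQ: "unitary n Q" unfolding Q_def by (intro unitary_mult unitary_adj uE uW)
  have uQ': "unitary n Q'" unfolding Q'_def by (intro unitary_mult unitary_adj uE uW V)
  have Qc: "Q \<in> carrier_mat n n" "Q' \<in> carrier_mat n n" using uQ uQ' unfolding unitary_def by simp_all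
  have Q1: "adj E * \<rho> * E = Q * L * adj Q"
    unfolding Q_def WL(6) using EM(1) WL(1,2) by (simp add: sqa[of _ n] adj_mult[of _ n n _ n])
  have Q2: "adj E * R * E = Q' * L * adj Q'"
    unfolding Q'_def R_def WL(6) using EM(1) WL(1,2) Vc by (simp add: sqa[of _ n] adj_mult[of _ n n _ n])
  define P where "P i k = (cmod (Q $$ (i,k)))^2 / 2 + (cmod (Q' $$ (i,k)))^2 / 2" for i k
  have P0: "P i k \<ge> 0" for i k unfolding P_def by simp
  have Prow: "(\<Sum>k<n. P i k) = 1" if "i < n" for i
    using row_norm[OF uQ that] row_norm[OF uQ' that]
    unfolding P_def sum.distrib sum_divide_distrib[symmetric] by simp
  have Pcol: "(\<Sum>i<n. P i k) = 1" if "k < n" for k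
    using col_norm[OF uQ that] col_norm[OF uQ' that]
    unfolding P_def sum.distrib sum_divide_distrib[symmetric] by simp
  have Mii: "Re (M $$ (i,i)) = (\<Sum>k<n. P i k * lam k)" if i: "i < n" for i
  proof -
    have "M $$ (i,i) = (\<Sum>a<n. \<Sum>b<n. cnj (E $$ (a,i)) * X $$ (a,b) * E $$ (b,i))"
      unfolding Meq by (rule bil_entry[OF EM(1) X i])
    also have "\<dots> = (\<Sum>a<n. \<Sum>b<n. (cnj (E $$ (a,i)) * \<rho> $$ (a,b) * E $$ (b,i)
         + cnj (E $$ (a,i)) * R $$ (a,b) * E $$ (b,i)) / 2)"
    proof (intro sum.cong refl)
      fix a b assume a: "a \<in> {..<n}" and b: "b \<in> {..<n}"
      have x1: "X $$ (a,b) = (\<rho> $$ (a,b) + R $$ (a,b)) / 2" using Xe a b unfolding R_def by simp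
      show "cnj (E $$ (a,i)) * X $$ (a,b) * E $$ (b,i) = (cnj (E $$ (a,i)) * \<rho> $$ (a,b) * E $$ (b,i)
         + cnj (E $$ (a,i)) * R $$ (a,b) * E $$ (b,i)) / 2"
        unfolding x1 by (simp add: field_simps)
    qed
    also have "\<dots> = ((\<Sum>a<n. \<Sum>b<n. cnj (E $$ (a,i)) * \<rho> $$ (a,b) * E $$ (b,i))
        + (\<Sum>a<n. \<Sum>b<n. cnj (E $$ (a,i)) * R $$ (a,b) * E $$ (b,i))) / 2"
      by (simp only: sum.distrib sum_divide_distrib[symmetric])
    also have "\<dots> = ((adj E * \<rho> * E) $$ (i,i) + (adj E * R * E) $$ (i,i)) / 2"
      using bil_entry[OF EM(1) rc i] bil_entry[OF EM(1) Rc i] by simp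
    also have "\<dots> = ((\<Sum>k<n. of_real ((cmod (Q $$ (i,k)))^2) * L $$ (k,k))
        + (\<Sum>k<n. of_real ((cmod (Q' $$ (i,k)))^2) * L $$ (k,k))) / 2"
      unfolding Q1 Q2 using diag_conj_entry[OF Qc(1) WL(2,3) i] diag_conj_entry[OF Qc(2) WL(2,3) i] by simp
    also have "(\<Sum>k<n. of_real ((cmod (Q $$ (i,k)))^2) * L $$ (k,k)) = of_real (\<Sum>k<n. (cmod (Q $$ (i,k)))^2 * lam k)"
      by (subst of_real_sum) (rule sum.cong; simp add: Lkk)
    also have "(\<Sum>k<n. of_real ((cmod (Q' $$ (i,k)))^2) * L $$ (k,k)) = of_real (\<Sum>k<n. (cmod (Q' $$ (i,k)))^2 * lam k)"
      by (subst of_real_sum) (rule sum.cong; simp add: Lkk)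
    also have "(of_real (\<Sum>k<n. (cmod (Q $$ (i,k)))^2 * lam k) + of_real (\<Sum>k<n. (cmod (Q' $$ (i,k)))^2 * lam k)) / 2
       = (of_real (\<Sum>k<n. P i k * lam k) :: complex)"
    proof -
      have "(\<Sum>k<n. P i k * lam k) = ((\<Sum>k<n. (cmod (Q $$ (i,k)))^2 * lam k) + (\<Sum>k<n. (cmod (Q' $$ (i,k)))^2 * lam k)) / 2"
        unfolding P_def by (simp add: sum.distrib sum_divide_distrib[symmetric] algebra_simps add_divide_distrib)
      then show ?thesis by (simp only: of_real_add of_real_divide of_real_numeral)
    qed
    finally show ?thesis by simp
  qed
  have "vn_entropy \<rho> = (\<Sum>k<n. (\<Sum>i<n. P i k) * eta (lam k))"
    unfolding e1 using Pcol Lkk by simp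
  also have "\<dots> = (\<Sum>i<n. \<Sum>k<n. P i k * eta (lam k))"
    unfolding sum_distrib_right by (rule sum.swap)
  also have "\<dots> \<le> (\<Sum>i<n. eta (\<Sum>k<n. P i k * lam k))"
    by (intro sum_mono eta_jensen) (simp_all add: P0 Prow lam0)
  also have "\<dots> = vn_entropy X"
    unfolding e2 using Mii by simp
  finally show ?thesis .
qed


definition Gmat :: "(nat \<Rightarrow> nat \<Rightarrow> nat \<Rightarrow> nat \<Rightarrow> complex) \<Rightarrow> complex mat" where
  "Gmat chi = mat 4 4 (\<lambda>(l,i). cnj (chi (l div 2) (l mod 2) (i div 2) (i mod 2)))"

lemma red_gram: "reduced_BR 2 2 chi = adj (Gmat chi) * Gmat chi"
proof (rule eq_matI)
  fix i j assume "i < dim_row (adj (Gmat chi) * Gmat chi)" "j < dim_col (adj (Gmat chi) * Gmat chi)"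
  then have i: "i < 4" and j: "j < 4" by (simp_all add: Gmat_def)
  show "reduced_BR 2 2 chi $$ (i, j) = (adj (Gmat chi) * Gmat chi) $$ (i, j)"
    using i j by (simp add: reduced_BR_def Gmat_def scalar_prod_def sum2 atLeast0LessThan sum4 mult.commute)
qed (simp_all add: reduced_BR_def Gmat_def)

definition vsign :: "nat \<Rightarrow> complex" where
  "vsign i = (if even (i div 2 + i mod 2) then 1 else -1)"

definition Vmat :: "complex mat" where
  "Vmat = mat 4 4 (\<lambda>(i,j). if i = j then vsign i else 0)"

lemma vsign_sq: "vsign i * vsign i = 1" "cnj (vsign i) = vsign i"
  by (simp_all add: vsign_def)

lemma V_unitary: "unitary 4 Vmat"
proof -
  have c: "Vmat \<in> carrier_mat 4 4" by (simp add: Vmat_def)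
  have "adj Vmat * Vmat = 1\<^sub>m 4"
  proof (rule eq_matI)
    fix i j assume "i < dim_row (1\<^sub>m 4 :: complex mat)" "j < dim_col (1\<^sub>m 4 :: complex mat)"
    then have i: "i < 4" and j: "j < 4" by simp_all
    show "(adj Vmat * Vmat) $$ (i,j) = 1\<^sub>m 4 $$ (i,j)"
      using i j by (simp add: Vmat_def scalar_prod_def atLeast0LessThan sum4 vsign_sq) 
  qed (simp_all add: Vmat_def)
  moreover have "Vmat * adj Vmat = 1\<^sub>m 4"
  proof (rule eq_matI)
    fix i j assume "i < dim_row (1\<^sub>m 4 :: complex mat)" "j < dim_col (1\<^sub>m 4 :: complex mat)"
    then have i: "i < 4" and j: "j < 4" by simp_all
    show "(Vmat * adj Vmat) $$ (i,j) = 1\<^sub>m 4 $$ (i,j)"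
      using i j by (simp add: Vmat_def scalar_prod_def atLeast0LessThan sum4 vsign_sq) 
  qed (simp_all add: Vmat_def)
  ultimately show ?thesis using c unfolding unitary_def by simp
qed

lemma V_sandwich:
  assumes A: "A \<in> carrier_mat 4 4" and a: "a < 4" and b: "b < 4"
  shows "(Vmat * A * adj Vmat) $$ (a,b) = vsign a * vsign b * A $$ (a,b)"
proof -
  have VA: "(Vmat * A) $$ (a,k) = vsign a * A $$ (a,k)" if k: "k < 4" for k
  proof -
    have "(Vmat * A) $$ (a,k) = (\<Sum>l<4. Vmat $$ (a,l) * A $$ (l,k))"
      using A a k by (simp add: Vmat_def scalar_prod_def atLeast0LessThan)
    also have "\<dots> = vsign a * A $$ (a,k)"
      using a by (simp add: sum4 Vmat_def) (cases "a = 0"; cases "a = 1"; cases "a = 2"; simp)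
    finally show ?thesis .
  qed
  have "(Vmat * A * adj Vmat) $$ (a,b) = (\<Sum>k<4. (Vmat * A) $$ (a,k) * cnj (Vmat $$ (b,k)))"
    using A a b by (simp add: Vmat_def scalar_prod_def atLeast0LessThan)
  also have "\<dots> = (\<Sum>k<4. vsign a * A $$ (a,k) * cnj (Vmat $$ (b,k)))"
    by (rule sum.cong) (simp_all add: VA)
  also have "\<dots> = vsign a * vsign b * A $$ (a,b)"
    using b by (simp add: sum4 Vmat_def vsign_sq) (cases "b = 0"; cases "b = 1"; cases "b = 2"; simp add: vsign_sq)
  finally show ?thesis .
qed

lemma key_ineq:
  "ent_out x y z 2 2 (psi_state \<alpha> \<theta> \<mu>) (phi_state \<beta>) \<le> ent_out x y z 2 2 (phi_state \<alpha>) (phi_state \<beta>)"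
proof -
  define \<rho> where "\<rho> = reduced_BR 2 2 (out_state x y z (psi_state \<alpha> \<theta> \<mu>) (phi_state \<beta>))"
  define X where "X = reduced_BR 2 2 (out_state x y z (phi_state \<alpha>) (phi_state \<beta>))"
  define G where "G = Gmat (out_state x y z (psi_state \<alpha> \<theta> \<mu>) (phi_state \<beta>))"
  have G: "G \<in> carrier_mat 4 4" by (simp add: G_def Gmat_def)
  have rho: "\<rho> = adj G * G" unfolding \<rho>_def G_def by (rule red_gram)
  have rc: "\<rho> \<in> carrier_mat 4 4" by (simp add: \<rho>_def reduced_BR_def)
  have X: "X \<in> carrier_mat 4 4" by (simp add: X_def reduced_BR_def)
  have Xe: "X $$ (a,b) = (\<rho> $$ (a,b) + (Vmat * \<rho> * adj Vmat) $$ (a,b)) / 2" if a: "a < 4" and b: "b < 4" for a b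
  proof -
    have "X $$ (a,b) = (if even (a div 2 + a mod 2 + b div 2 + b mod 2) then \<rho> $$ (a,b) else 0)"
      unfolding X_def \<rho>_def by (rule pinch_entry[OF a b])
    moreover have "vsign a * vsign b = (if even (a div 2 + a mod 2 + b div 2 + b mod 2) then 1 else -1)"
    proof -
      have "a = 0 \<or> a = 1 \<or> a = 2 \<or> a = 3" "b = 0 \<or> b = 1 \<or> b = 2 \<or> b = 3" using a b by auto
      then show ?thesis by (elim disjE) (simp_all add: vsign_def)
    qed
    ultimately show ?thesis using V_sandwich[OF rc a b] by simp
  qed
  have "vn_entropy \<rho> \<le> vn_entropy X"
    by (rule pinch_entropy[OF G rho V_unitary X Xe])
  then show ?thesis unfolding ent_out_def \<rho>_def X_def .
qed

lemma phi_unit: "unit_state 2 (phi_state a)"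
  by (simp add: unit_state_def sum2 phi_state_def)

theorem lemma3:
  fixes x y z \<alpha> \<beta> \<theta> \<mu> :: real
  assumes "normalized x y z"
    and "\<alpha> \<in> {0..pi/2}" and "\<beta> \<in> {0..pi/2}" and "\<theta> \<in> {0..<2*pi}" and "\<mu> \<in> {0<..pi/2}"
    and "\<forall>v\<in>ent_values x y z. v \<le> ent_out x y z 2 2 (psi_state \<alpha> \<theta> \<mu>) (phi_state \<beta>)"
  shows "\<exists>\<alpha>' \<beta>'. \<alpha>' \<in> {0..pi/2} \<and> \<beta>' \<in> {0..pi/2}
           \<and> (\<forall>v\<in>ent_values x y z. v \<le> ent_out x y z 2 2 (phi_state \<alpha>') (phi_state \<beta>'))
           \<and> K_E x y z = ent_out x y z 2 2 (phi_state \<alpha>') (phi_state \<beta>')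
           \<and> (\<forall>a\<in>{0..pi/2}. \<forall>b\<in>{0..pi/2}.
                ent_out x y z 2 2 (phi_state a) (phi_state b) \<le> ent_out x y z 2 2 (phi_state \<alpha>') (phi_state \<beta>'))"
proof -
  let ?v = "ent_out x y z 2 2 (phi_state \<alpha>) (phi_state \<beta>)"
  have mem: "ent_out x y z 2 2 (phi_state a) (phi_state b) \<in> ent_values x y z" for a b
    using phi_unit[of a] phi_unit[of b] unfolding ent_values_def
    by (intro CollectI exI[of _ 2] exI[of _ "phi_state a"] exI[of _ "phi_state b"]) simp
  have ub: "\<forall>v\<in>ent_values x y z. v \<le> ?v"
    using assms(6) key_ineq[of x y z \<alpha> \<theta> \<mu> \<beta>] by fastforce
  have KE: "K_E x y z = ?v"
    unfolding K_E_def using mem[of \<alpha> \<beta>] ub by (intro cSup_eq_maximum) simp_all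
  show ?thesis
    using assms(2,3) ub KE mem by blast
qed

end
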